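(* Let $S$ be a semigroup and let $a\in S$ be an idempotent such that $aSa\subseteq\operatorname{Reg}(S)$. Let $P=\{x\in Sa: x\,\mathscr L\,ax\}$, and let $\phi:P\to aSa$, $x\mapsto ax$. Then $\phi$ is a surjective homomorphism, and (i) $E(Sa)=E(aSa)\phi^{-1}$; (ii) $\mathbb E(Sa)=\mathbb E(aSa)\phi^{-1}$.
   Context: $Sa=\{xa:x\in S\}$ and $aSa=\{axa:x\in S\}$ (a monoid with identity $a$). $\operatorname{Reg}(S)$ is the set of regular elements of $S$. $\mathscr L$ is Green's $\mathscr L$-relation on $S$. For a semigroup $T$, $E(T)$ is its set of idempotents and $\mathbb E(T)=\langle E(T)\rangle$ is the subsemigroup generated by its idempotents. $\phi^{-1}$ denotes preimage. *)

theory Defs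
  imports Main
begin

text \<open>The semigroup S is the ambient type 'a of class semigroup_mult.\<close>

definition regular_elems :: "'a::semigroup_mult set" where
  "regular_elems = {x. \<exists>y. x * y * x = x}"

text \<open>Green's L-relation: S^1 x = S^1 y.\<close>
definition green_L :: "'a::semigroup_mult \<Rightarrow> 'a \<Rightarrow> bool" where
  "green_L x y \<longleftrightarrow> (x = y \<or> (\<exists>s. x = s * y)) \<and> (y = x \<or> (\<exists>s. y = s * x))"

definition idems :: "'a::semigroup_mult set \<Rightarrow> 'a set" where
  "idems T = {e \<in> T. e * e = e}"

inductive_set sgp_gen :: "'a::semigroup_mult set \<Rightarrow> 'a set" for X where
  base: "x \<in> X \<Longrightarrow> x \<in> sgp_gen X"
| mult: "x \<in> sgp_gen X \<Longrightarrow> y \<in> sgp_gen X \<Longrightarrow> x * y \<in> sgp_gen X"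

definition idem_gen :: "'a::semigroup_mult set \<Rightarrow> 'a set" where
  "idem_gen T = sgp_gen (idems T)"

definition left_ideal_at :: "'a::semigroup_mult \<Rightarrow> 'a set" where
  "left_ideal_at a = {x * a | x. True}"

definition local_monoid :: "'a::semigroup_mult \<Rightarrow> 'a set" where
  "local_monoid a = {a * x * a | x. True}"

end

theory Submission
  imports Defs
begin

lemma li_iff:
  fixes a :: "'a::semigroup_mult"
  assumes "a * a = a"
  shows "x \<in> left_ideal_at a \<longleftrightarrow> x * a = x"
proof
  assume "x \<in> left_ideal_at a"
  then obtain s where "x = s * a" by (auto simp: left_ideal_at_def)
  then show "x * a = x" using assms by (simp add: mult.assoc)
next
  assume "x * a = x"
  then show "x \<in> left_ideal_at a" unfolding left_ideal_at_def by (metis (mono_tags) mem_Collect_eq)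
qed

lemma lm_iff:
  fixes a :: "'a::semigroup_mult"
  assumes "a * a = a"
  shows "x \<in> local_monoid a \<longleftrightarrow> x * a = x \<and> a * x = x"
proof
  assume "x \<in> local_monoid a"
  then obtain s where "x = a * s * a" by (auto simp: local_monoid_def)
  then show "x * a = x \<and> a * x = x" using assms by (metis mult.assoc)
next
  assume "x * a = x \<and> a * x = x"
  then have "x = a * x * a" by (simp add: mult.assoc)
  then show "x \<in> local_monoid a" unfolding local_monoid_def by blast
qed

lemma sgp_gen_mono: "x \<in> sgp_gen X \<Longrightarrow> X \<subseteq> Y \<Longrightarrow> x \<in> sgp_gen Y"
  by (induction rule: sgp_gen.induct) (auto intro: sgp_gen.intros)

theorem theorem3p13:
  fixes a :: "'a::semigroup_mult"
  assumes "a * a = a"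
    and "local_monoid a \<subseteq> regular_elems"
  defines "P \<equiv> {x \<in> left_ideal_at a. green_L x (a * x)}"
  shows "(\<forall>x\<in>P. \<forall>y\<in>P. x * y \<in> P)
    \<and> (\<forall>x\<in>P. \<forall>y\<in>P. a * (x * y) = (a * x) * (a * y))
    \<and> (\<lambda>x. a * x) ` P = local_monoid a
    \<and> idems (left_ideal_at a) = {x \<in> P. a * x \<in> idems (local_monoid a)}
    \<and> idem_gen (left_ideal_at a) = {x \<in> P. a * x \<in> idem_gen (local_monoid a)}"
proof -
  note aa = assms(1)
  have Pi: "x \<in> P \<longleftrightarrow> x * a = x \<and> (x = a * x \<or> (\<exists>s. x = s * (a * x)))" for x
    unfolding P_def green_L_def li_iff[OF aa] by auto
  have closed: "\<forall>x\<in>P. \<forall>y\<in>P. x * y \<in> P"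
  proof (intro ballI)
    fix x y assume x: "x \<in> P" and y: "y \<in> P"
    have "x * y * a = x * y" using x y Pi by (metis mult.assoc)
    moreover have "x * y = a * (x * y) \<or> (\<exists>s. x * y = s * (a * (x * y)))"
      using x Pi by (metis mult.assoc)
    ultimately show "x * y \<in> P" using Pi by blast
  qed
  have hom: "\<forall>x\<in>P. \<forall>y\<in>P. a * (x * y) = (a * x) * (a * y)"
    using Pi by (metis mult.assoc)
  have img: "(\<lambda>x. a * x) ` P = local_monoid a"
  proof
    show "(\<lambda>x. a * x) ` P \<subseteq> local_monoid a"
    proof
      fix b assume "b \<in> (\<lambda>x. a * x) ` P"
      then obtain x where x: "x \<in> P" "b = a * x" by auto
      have "x * a = x" using x Pi by auto
      then have "b * a = b" "a * b = b" using x aa by (metis mult.assoc)+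
      then show "b \<in> local_monoid a" using lm_iff[OF aa] by auto
    qed
    show "local_monoid a \<subseteq> (\<lambda>x. a * x) ` P"
    proof
      fix b assume b: "b \<in> local_monoid a"
      then have "b * a = b" "a * b = b" using lm_iff[OF aa] by auto
      then have "b \<in> P" using Pi by auto
      then show "b \<in> (\<lambda>x. a * x) ` P" using \<open>a * b = b\<close> by (metis image_eqI)
    qed
  qed
  have idm: "idems (left_ideal_at a) = {x \<in> P. a * x \<in> idems (local_monoid a)}"
  proof
    show "idems (left_ideal_at a) \<subseteq> {x \<in> P. a * x \<in> idems (local_monoid a)}"
    proof
      fix e assume "e \<in> idems (left_ideal_at a)"
      then have e: "e * a = e" "e * e = e" by (auto simp: idems_def li_iff[OF aa])
      have "e = e * (a * e)" using e by (metis mult.assoc)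
      then have "e \<in> P" using Pi e by blast
      moreover have "a * e * a = a * e" "a * (a * e) = a * e" using e aa by (metis mult.assoc)+
      moreover have "a * e * (a * e) = a * e" using e by (metis mult.assoc)
      ultimately show "e \<in> {x \<in> P. a * x \<in> idems (local_monoid a)}"
        by (auto simp: idems_def lm_iff[OF aa])
    qed
    show "{x \<in> P. a * x \<in> idems (local_monoid a)} \<subseteq> idems (left_ideal_at a)"
    proof
      fix x assume "x \<in> {x \<in> P. a * x \<in> idems (local_monoid a)}"
      then have x: "x \<in> P" "a * x * (a * x) = a * x" by (auto simp: idems_def)
      have xa: "x * a = x" using x Pi by auto
      have "x * x = x"
      proof (cases "x = a * x")
        case True then show ?thesis using x by metis
      next
        case False
        then obtain s where s: "x = s * (a * x)" using x Pi by auto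
        have "x * x = s * (a * x * (a * x))" using s xa by (metis mult.assoc)
        then show ?thesis using x s by simp
      qed
      then show "x \<in> idems (left_ideal_at a)" using xa by (auto simp: idems_def li_iff[OF aa])
    qed
  qed
  have sub: "idems (local_monoid a) \<subseteq> idems (left_ideal_at a)"
    by (auto simp: idems_def lm_iff[OF aa] li_iff[OF aa])
  have gen: "idem_gen (left_ideal_at a) = {x \<in> P. a * x \<in> idem_gen (local_monoid a)}"
  proof
    show "idem_gen (left_ideal_at a) \<subseteq> {x \<in> P. a * x \<in> idem_gen (local_monoid a)}"
    proof
      fix z assume "z \<in> idem_gen (left_ideal_at a)"
      then have "z \<in> sgp_gen (idems (left_ideal_at a))" by (simp add: idem_gen_def)
      then show "z \<in> {x \<in> P. a * x \<in> idem_gen (local_monoid a)}"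
      proof (induction rule: sgp_gen.induct)
        case (base x)
        then show ?case using idm by (auto simp: idem_gen_def intro: sgp_gen.base)
      next
        case (mult x y)
        then show ?case using closed hom by (auto simp: idem_gen_def intro: sgp_gen.mult)
      qed
    qed
    show "{x \<in> P. a * x \<in> idem_gen (local_monoid a)} \<subseteq> idem_gen (left_ideal_at a)"
    proof
      fix x assume "x \<in> {x \<in> P. a * x \<in> idem_gen (local_monoid a)}"
      then have x: "x \<in> P" and g: "a * x \<in> sgp_gen (idems (local_monoid a))"
        by (auto simp: idem_gen_def)
      have g2: "a * x \<in> sgp_gen (idems (left_ideal_at a))" using sgp_gen_mono[OF g sub] .
      have xa: "x * a = x" using x Pi by auto
      have "a * x \<in> local_monoid a" using xa aa lm_iff[OF aa] by (metis mult.assoc)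
      then obtain y where y: "a * x * y * (a * x) = a * x"
        using assms(2) by (auto simp: regular_elems_def)
      have xyb: "x * y * (a * x) = x"
      proof (cases "x = a * x")
        case True then show ?thesis using y by metis
      next
        case False
        then obtain s where s: "x = s * (a * x)" using x Pi by auto
        have "x * y * (a * x) = s * (a * x * y * (a * x))" using s by (metis mult.assoc)
        then show ?thesis using y s by simp
      qed
      define f where "f = x * y * a"
      have fa: "f * a = f" using aa by (simp add: f_def mult.assoc)
      have ff: "f * f = f"
      proof -
        have "f * f = (x * y * (a * x)) * y * a" by (simp add: f_def mult.assoc)
        then show ?thesis using xyb f_def by simp
      qed
      have "f \<in> idems (left_ideal_at a)" using fa ff by (auto simp: idems_def li_iff[OF aa])
      then have "f \<in> sgp_gen (idems (left_ideal_at a))" by (rule sgp_gen.base)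
      from sgp_gen.mult[OF this g2] have "f * (a * x) \<in> sgp_gen (idems (left_ideal_at a))" .
      moreover have "f * (a * x) = x" using xyb aa unfolding f_def by (metis mult.assoc)
      ultimately show "x \<in> idem_gen (left_ideal_at a)" by (simp add: idem_gen_def)
    qed
  qed
  show ?thesis using closed hom img idm gen by blast
qed

end
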